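(* Let $E$ be a Banach lattice with an order continuous norm, let $\mathfrak{B}$ be a Boolean subalgebra of $\mathfrak{B}(E)$ and let $\xi$ be a forward filtration in $\mathfrak{B}$. (i) If $T,S\colon E\to E$ are commuting $\mathfrak{B}$-Volterra operators then $\hat{T}_\xi$ and $\hat{S}_\xi$ commute on $\mathcal{M}_0(\xi)$. (ii) If $T$ is $\mathfrak{B}$-Volterra and $S=\pi T$ for some $\pi\in\mathfrak{B}$, then $\hat{S}_\xi=\pi\cdot\hat{T}_\xi$. (iii) If $T$ is $\mathfrak{B}$-Volterra and $S=\pi+T-\pi T$ for some $\pi\in\mathfrak{B}$, then $\hat{S}_\xi=\hat{\pi}_\xi+\hat{T}_\xi-\pi\cdot\hat{T}_\xi$.
   Context: $\mathfrak{B}(E)$ is the Boolean algebra of all order projections on $E$ ($\pi\le\rho$ iff $\pi\rho=\pi$, zero $\mathbf 0$, unit $\mathbf 1=I_E$). A positive operator $T$ is $\mathfrak{B}$-Volterra if for all $\pi\in\mathfrak{B}$, $x,y\in E$, $\pi x=\pi y$ implies $\pi Tx=\pi Ty$. A forward filtration in $\mathfrak{B}$ is a map $\xi\colon\{0,1,\dots,\infty\}\to\mathfrak{B}$ with $\xi_n\le\xi_{n+1}$, $\xi_0=\mathbf 0$, $\xi_\infty=\mathbf 1$. $\mathcal{M}_0(\xi)$ is the set of sequences $(x_n)_{n\ge1}$ in $E$ with $\xi_nx_m=x_n$ whenever $m\ge n\ge1$. For a positive operator $R$ on $E$ (in particular $R=\pi\in\mathfrak{B}$), $\hat{R}_\xi((x_n)_{n\ge1})=(\xi_nRx_n)_{n\ge1}$,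 and $\pi\cdot(x_n)_{n\ge1}=(\pi x_n)_{n\ge1}$. *)

theory Defs
  imports Complex_Main "HOL-Library.Extended_Nat"
begin

class banach_lattice = banach + ordered_real_vector + lattice +
  assumes lattice_norm: "sup x (- x) \<le> sup y (- y) \<Longrightarrow> norm x \<le> norm y"

text \<open>Order continuous norm: whenever a net decreases to 0 (x_alpha down to 0), its norms
  tend to 0. Formulated with downward directed sets D with infimum 0.\<close>
definition order_continuous_norm :: "'a::banach_lattice itself \<Rightarrow> bool" where
  "order_continuous_norm _ \<longleftrightarrow>
     (\<forall>D::'a set. D \<noteq> {} \<and> (\<forall>a\<in>D. \<forall>b\<in>D. \<exists>c\<in>D. c \<le> a \<and> c \<le> b)
        \<and> (\<forall>d\<in>D. 0 \<le> d) \<and> (\<forall>z. (\<forall>d\<in>D. z \<le> d) \<longrightarrow> z \<le> 0)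
        \<longrightarrow> (\<forall>e>0. \<exists>d\<in>D. norm d < e))"

definition positive_operator :: "('a::banach_lattice \<Rightarrow> 'a) \<Rightarrow> bool" where
  "positive_operator T \<longleftrightarrow> linear T \<and> (\<forall>x. 0 \<le> x \<longrightarrow> 0 \<le> T x)"

definition order_projection :: "('a::banach_lattice \<Rightarrow> 'a) \<Rightarrow> bool" where
  "order_projection P \<longleftrightarrow> linear P \<and> P \<circ> P = P \<and> (\<forall>x. 0 \<le> x \<longrightarrow> 0 \<le> P x \<and> P x \<le> x)"

definition proj_le :: "('a \<Rightarrow> 'a) \<Rightarrow> ('a \<Rightarrow> 'a) \<Rightarrow> bool" where
  "proj_le \<pi> \<rho> \<longleftrightarrow> \<pi> \<circ> \<rho> = \<pi>"

text \<open>Boolean subalgebra of the Boolean algebra of all order projections: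
  contains zero and unit, closed under meet (composition), join (pi + rho - pi rho)
  and complement (I - pi).\<close>
definition boolean_subalgebra :: "('a::banach_lattice \<Rightarrow> 'a) set \<Rightarrow> bool" where
  "boolean_subalgebra B \<longleftrightarrow>
     (\<forall>\<pi>\<in>B. order_projection \<pi>) \<and> (\<lambda>x. 0) \<in> B \<and> id \<in> B
     \<and> (\<forall>\<pi>\<in>B. \<forall>\<rho>\<in>B. \<pi> \<circ> \<rho> \<in> B)
     \<and> (\<forall>\<pi>\<in>B. \<forall>\<rho>\<in>B. (\<lambda>x. \<pi> x + \<rho> x - \<pi> (\<rho> x)) \<in> B)
     \<and> (\<forall>\<pi>\<in>B. (\<lambda>x. x - \<pi> x) \<in> B)"

definition volterra :: "('a::banach_lattice \<Rightarrow> 'a) set \<Rightarrow> ('a \<Rightarrow> 'a) \<Rightarrow> bool" where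
  "volterra B T \<longleftrightarrow> positive_operator T \<and>
     (\<forall>\<pi>\<in>B. \<forall>x y. \<pi> x = \<pi> y \<longrightarrow> \<pi> (T x) = \<pi> (T y))"

definition forward_filtration :: "('a::banach_lattice \<Rightarrow> 'a) set \<Rightarrow> (enat \<Rightarrow> 'a \<Rightarrow> 'a) \<Rightarrow> bool" where
  "forward_filtration B \<xi> \<longleftrightarrow> (\<forall>n. \<xi> n \<in> B)
     \<and> (\<forall>n::nat. proj_le (\<xi> (enat n)) (\<xi> (enat (Suc n))))
     \<and> \<xi> 0 = (\<lambda>x. 0) \<and> \<xi> \<infinity> = id"

text \<open>M_0(xi): sequences (x_n)_{n \<ge> 1}; the entry at index 0 is ignored.\<close>
definition M0 :: "(enat \<Rightarrow> 'a::banach_lattice \<Rightarrow> 'a) \<Rightarrow> (nat \<Rightarrow> 'a) set" where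
  "M0 \<xi> = {x. \<forall>m n. 1 \<le> n \<and> n \<le> m \<longrightarrow> \<xi> (enat n) (x m) = x n}"

definition hat :: "(enat \<Rightarrow> 'a \<Rightarrow> 'a) \<Rightarrow> ('a \<Rightarrow> 'a) \<Rightarrow> (nat \<Rightarrow> 'a) \<Rightarrow> (nat \<Rightarrow> 'a)" where
  "hat \<xi> R x = (\<lambda>n. \<xi> (enat n) (R (x n)))"

end

theory Submission
  imports Defs
begin

lemma op_props:
  assumes "order_projection p"
  shows "linear p" "\<And>x. p (p x) = p x" "\<And>x. 0 \<le> x \<Longrightarrow> 0 \<le> p x" "\<And>x. 0 \<le> x \<Longrightarrow> p x \<le> x"
  using assms unfolding order_projection_def by (auto simp: fun_eq_iff)

lemma lemA:
  fixes p q :: "'a::banach_lattice \<Rightarrow> 'a"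
  assumes p: "order_projection p" and q: "order_projection q" and x: "0 \<le> x"
  shows "q (p (q x)) = p (q x)"
proof -
  note P = op_props[OF p] and Q = op_props[OF q]
  define y where "y = p (q x)"
  have qx: "0 \<le> q x" using Q(3) x by blast
  have y0: "0 \<le> y" using P(3) qx y_def by blast
  have yq: "y \<le> q x" using P(4) qx y_def by blast
  have "0 \<le> q x - y" using yq by simp
  hence "q (q x - y) \<le> q x - y" using Q(4) by blast
  hence "q x - q y \<le> q x - y" using linear_diff[OF Q(1)] Q(2) by simp
  hence "y \<le> q y" by simp
  moreover have "q y \<le> y" using Q(4) y0 by blast
  ultimately show ?thesis unfolding y_def by (meson order.antisym)
qed

lemma comm_pos:
  fixes p q :: "'a::banach_lattice \<Rightarrow> 'a"
  assumes B: "boolean_subalgebra B" and pB: "p \<in> B" and qB: "q \<in> B" and x: "0 \<le> x"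
  shows "q (p x) = p (q x)"
proof -
  have p: "order_projection p" and q: "order_projection q"
    and q': "order_projection (\<lambda>x. x - q x)"
    using B pB qB unfolding boolean_subalgebra_def by auto
  note P = op_props[OF p] and Q = op_props[OF q]
  have 1: "q (p (q x)) = p (q x)" using lemA[OF p q x] .
  have 2: "(p (x - q x)) - q (p (x - q x)) = p (x - q x)" using lemA[OF p q' x] by simp
  have "q (p (x - q x)) = 0" using 2 by simp
  hence "q (p x) - q (p (q x)) = 0" using linear_diff[OF P(1)] linear_diff[OF Q(1)] by simp
  thus ?thesis using 1 by simp
qed

lemma comm_all:
  fixes p q :: "'a::banach_lattice \<Rightarrow> 'a"
  assumes B: "boolean_subalgebra B" and pB: "p \<in> B" and qB: "q \<in> B"
  shows "q (p x) = p (q x)"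
proof -
  have p: "order_projection p" and q: "order_projection q"
    using B pB qB unfolding boolean_subalgebra_def by auto
  note P = op_props[OF p] and Q = op_props[OF q]
  define a where "a = sup x 0"
  have a0: "0 \<le> a" unfolding a_def by simp
  have b0: "0 \<le> a - x" unfolding a_def by simp
  have xe: "x = a - (a - x)" by simp
  have "q (p x) = q (p a) - q (p (a - x))"
    by (subst xe, simp add: linear_diff[OF P(1)] linear_diff[OF Q(1)])
  also have "\<dots> = p (q a) - p (q (a - x))"
    using comm_pos[OF B pB qB a0] comm_pos[OF B pB qB b0] by simp
  also have "\<dots> = p (q x)"
    by (simp add: linear_diff[OF P(1)] linear_diff[OF Q(1)])
  finally show ?thesis .
qed

theorem corollary4p4:
  fixes B :: "('a::banach_lattice \<Rightarrow> 'a) set"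
    and \<xi> :: "enat \<Rightarrow> 'a \<Rightarrow> 'a"
  assumes "order_continuous_norm TYPE('a)"
    and "boolean_subalgebra B"
    and "forward_filtration B \<xi>"
  shows "(\<forall>T S. volterra B T \<and> volterra B S \<and> T \<circ> S = S \<circ> T \<longrightarrow>
            (\<forall>x\<in>M0 \<xi>. \<forall>n\<ge>1. hat \<xi> T (hat \<xi> S x) n = hat \<xi> S (hat \<xi> T x) n))
       \<and> (\<forall>T S \<pi>. volterra B T \<and> \<pi> \<in> B \<and> S = \<pi> \<circ> T \<longrightarrow>
            (\<forall>x\<in>M0 \<xi>. \<forall>n\<ge>1. hat \<xi> S x n = \<pi> (hat \<xi> T x n)))
       \<and> (\<forall>T S \<pi>. volterra B T \<and> \<pi> \<in> B \<and> S = (\<lambda>y. \<pi> y + T y - \<pi> (T y)) \<longrightarrow>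
            (\<forall>x\<in>M0 \<xi>. \<forall>n\<ge>1. hat \<xi> S x n = hat \<xi> \<pi> x n + hat \<xi> T x n - \<pi> (hat \<xi> T x n)))"
proof (intro conjI allI impI ballI)
  have xiB: "\<And>n. \<xi> n \<in> B" using assms(3) unfolding forward_filtration_def by auto
  have xiP: "\<And>n. order_projection (\<xi> n)" using xiB assms(2) unfolding boolean_subalgebra_def by auto
  fix T S :: "'a \<Rightarrow> 'a" and x n
  assume h: "volterra B T \<and> volterra B S \<and> T \<circ> S = S \<circ> T" and "n \<ge> (1::nat)"
  let ?p = "\<xi> (enat n)"
  have vT: "\<And>y. ?p (T (?p y)) = ?p (T y)"
    using h xiB op_props(2)[OF xiP] unfolding volterra_def by metis
  have vS: "\<And>y. ?p (S (?p y)) = ?p (S y)"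
    using h xiB op_props(2)[OF xiP] unfolding volterra_def by metis
  have c: "T (S (x n)) = S (T (x n))" using h by (metis comp_apply)
  show "hat \<xi> T (hat \<xi> S x) n = hat \<xi> S (hat \<xi> T x) n"
    unfolding hat_def using vT vS c by simp
next
  have xiB: "\<And>n. \<xi> n \<in> B" using assms(3) unfolding forward_filtration_def by auto
  fix T S \<pi> :: "'a \<Rightarrow> 'a" and x n
  assume h: "volterra B T \<and> \<pi> \<in> B \<and> S = \<pi> \<circ> T"
  show "hat \<xi> S x n = \<pi> (hat \<xi> T x n)"
    unfolding hat_def using h comm_all[OF assms(2) h[THEN conjunct2, THEN conjunct1] xiB] by simp
next
  have xiB: "\<And>n. \<xi> n \<in> B" using assms(3) unfolding forward_filtration_def by auto
  have xiP: "\<And>n. order_projection (\<xi> n)" using xiB assms(2) unfolding boolean_subalgebra_def by auto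
  fix T S \<pi> :: "'a \<Rightarrow> 'a" and x n
  assume h: "volterra B T \<and> \<pi> \<in> B \<and> S = (\<lambda>y. \<pi> y + T y - \<pi> (T y))"
  have L: "linear (\<xi> (enat n))" using op_props(1)[OF xiP] .
  show "hat \<xi> S x n = hat \<xi> \<pi> x n + hat \<xi> T x n - \<pi> (hat \<xi> T x n)"
    unfolding hat_def using h comm_all[OF assms(2) h[THEN conjunct2, THEN conjunct1] xiB]
    by (simp add: linear_diff[OF L] linear_add[OF L])
qed

end
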